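(* Let $G$ be a connected weighted multigraph on the vertex set $V$, $|V|=n\ge 2$, with positive edge weights, weighted adjacency matrix $A$ and spectral radius $\rho$. For $\alpha>0$ put $t=(\rho+\alpha^{-1})^{-1}\in(0,\rho^{-1})$, $R_t=(I-tA)^{-1}=(r_{ij}(t))$, and $$d^{W}_\alpha(i,j)=\theta\Bigl(\tfrac12\bigl(\ln r_{ii}(t)+\ln r_{jj}(t)\bigr)-\ln r_{ij}(t)\Bigr),\qquad \theta=\ln\bigl(e+\alpha^{2/n}\bigr)\frac{\alpha-1}{\ln\alpha}$$ (with $\theta=\ln(e+1)$ when $\alpha=1$). Then for all $i,j\in V$, $$\lim_{\alpha\to0^+}d^{W}_\alpha(i,j)=d^{s}(i,j),$$ where $d^s(i,j)$ is the shortest path distance, i.e. the minimum number of edges of a path between $i$ and $j$ in $G$.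
   Context: $G$ may have loops and multiple edges; $A=(a_{ij})$ has $a_{ij}$ equal to the sum of the weights of the edges joining $i$ and $j$. *)

theory Defs
  imports "Jordan_Normal_Form.Spectral_Radius"
begin

text \<open>A weighted multigraph on vertices {0..<n} is given by its weighted adjacency
  matrix A (entry (i,j) = sum of weights of edges joining i and j). With positive
  edge weights, i and j are adjacent iff A(i,j) > 0.\<close>

definition weighted_adjacency :: "nat \<Rightarrow> real mat \<Rightarrow> bool" where
  "weighted_adjacency n A \<longleftrightarrow> A \<in> carrier_mat n n \<and> A\<^sup>T = A \<and>
     (\<forall>i<n. \<forall>j<n. A $$ (i,j) \<ge> 0)"

definition has_walk :: "nat \<Rightarrow> real mat \<Rightarrow> nat \<Rightarrow> nat \<Rightarrow> nat \<Rightarrow> bool" where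
  "has_walk n A k i j \<longleftrightarrow> (\<exists>p :: nat \<Rightarrow> nat. p 0 = i \<and> p k = j \<and> (\<forall>m\<le>k. p m < n) \<and>
     (\<forall>m<k. A $$ (p m, p (Suc m)) > 0))"

definition graph_connected :: "nat \<Rightarrow> real mat \<Rightarrow> bool" where
  "graph_connected n A \<longleftrightarrow> (\<forall>i<n. \<forall>j<n. \<exists>k. has_walk n A k i j)"

definition sp_dist :: "nat \<Rightarrow> real mat \<Rightarrow> nat \<Rightarrow> nat \<Rightarrow> nat" where
  "sp_dist n A i j = (LEAST k. has_walk n A k i j)"

definition rho :: "real mat \<Rightarrow> real" where
  "rho A = spectral_radius (map_mat complex_of_real A)"

definition resolvent :: "nat \<Rightarrow> real mat \<Rightarrow> real \<Rightarrow> real mat" where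
  "resolvent n A t = (THE B. B \<in> carrier_mat n n \<and>
      (1\<^sub>m n - t \<cdot>\<^sub>m A) * B = 1\<^sub>m n \<and> B * (1\<^sub>m n - t \<cdot>\<^sub>m A) = 1\<^sub>m n)"

definition theta :: "nat \<Rightarrow> real \<Rightarrow> real" where
  "theta n \<alpha> = (if \<alpha> = 1 then ln (exp 1 + 1)
                 else ln (exp 1 + \<alpha> powr (2 / real n)) * (\<alpha> - 1) / ln \<alpha>)"

definition walk_dist :: "nat \<Rightarrow> real mat \<Rightarrow> real \<Rightarrow> nat \<Rightarrow> nat \<Rightarrow> real" where
  "walk_dist n A \<alpha> i j =
     (let t = inverse (rho A + inverse \<alpha>); R = resolvent n A t
      in theta n \<alpha> * ((ln (R $$ (i,i)) + ln (R $$ (j,j))) / 2 - ln (R $$ (i,j))))"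

end

theory Submission
  imports Defs "HOL-Real_Asymp.Real_Asymp"
begin


lemma pow_entry_Suc:
  assumes A: "A \<in> carrier_mat n n" and "i < n" "j < n"
  shows "(A ^\<^sub>m Suc k) $$ (i,j) = (\<Sum>l<n. (A ^\<^sub>m k) $$ (i,l) * A $$ (l,j))"
  using assms by (simp add: scalar_prod_def lessThan_atLeast0 row_def col_def)

lemma pow_nonneg:
  assumes "weighted_adjacency n A" "i < n" "j < n"
  shows "0 \<le> (A ^\<^sub>m k) $$ (i,j)"
  using assms(2,3)
proof (induction k arbitrary: j)
  case 0
  then show ?case using assms(1) by (auto simp: weighted_adjacency_def)
next
  case (Suc k)
  have A: "A \<in> carrier_mat n n" using assms(1) by (auto simp: weighted_adjacency_def)
  show ?case unfolding pow_entry_Suc[OF A Suc.prems]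
    using Suc assms(1) by (intro sum_nonneg mult_nonneg_nonneg) (auto simp: weighted_adjacency_def)
qed

lemma pow_bound:
  assumes "weighted_adjacency n A" "i < n" "j < n" "0 \<le> M" "\<And>i j. i < n \<Longrightarrow> j < n \<Longrightarrow> A $$ (i,j) \<le> M"
  shows "(A ^\<^sub>m k) $$ (i,j) \<le> (real n * M) ^ k"
  using assms(2,3)
proof (induction k arbitrary: j)
  case 0
  then show ?case using assms(1) by (auto simp: weighted_adjacency_def)
next
  case (Suc k)
  have A: "A \<in> carrier_mat n n" using assms(1) by (auto simp: weighted_adjacency_def)
  have "(\<Sum>l<n. (A ^\<^sub>m k) $$ (i,l) * A $$ (l,j)) \<le> (\<Sum>l<n. (real n * M) ^ k * M)"
    apply (intro sum_mono mult_mono)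
    using Suc assms pow_nonneg[OF assms(1)] by (auto simp: weighted_adjacency_def)
  also have "\<dots> = (real n * M) ^ Suc k" by simp
  finally show ?case unfolding pow_entry_Suc[OF A Suc.prems] .
qed

lemma walk_0: "has_walk n A 0 i j \<longleftrightarrow> (i = j \<and> i < n)"
  unfolding has_walk_def by auto

lemma walk_Suc: "j < n \<Longrightarrow> has_walk n A (Suc k) i j \<longleftrightarrow> (\<exists>l<n. has_walk n A k i l \<and> A $$ (l,j) > 0)"
proof
  assume "has_walk n A (Suc k) i j"
  then obtain p where p: "p 0 = i" "p (Suc k) = j" "\<forall>m\<le>Suc k. p m < n"
     "\<forall>m<Suc k. A $$ (p m, p (Suc m)) > 0" unfolding has_walk_def by blast
  have "has_walk n A k i (p k)" unfolding has_walk_def using p by (intro exI[of _ p]) auto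
  then show "\<exists>l<n. has_walk n A k i l \<and> A $$ (l,j) > 0" using p by (intro exI[of _ "p k"]) auto
next
  assume "\<exists>l<n. has_walk n A k i l \<and> A $$ (l,j) > 0"
  then obtain l p where l: "l < n" "A $$ (l,j) > 0" and p: "p 0 = i" "p k = l" "\<forall>m\<le>k. p m < n"
     "\<forall>m<k. A $$ (p m, p (Suc m)) > 0" unfolding has_walk_def by blast
  let ?q = "p(Suc k := j)"
  assume j: "j < n"
  show "has_walk n A (Suc k) i j" unfolding has_walk_def
    apply (intro exI[of _ ?q])
    using l p j by (auto simp: le_Suc_eq less_Suc_eq)
qed

lemma pow_pos_iff:
  assumes "weighted_adjacency n A" "i < n" "j < n"
  shows "(A ^\<^sub>m k) $$ (i,j) > 0 \<longleftrightarrow> has_walk n A k i j"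
  using assms(3)
proof (induction k arbitrary: j)
  case 0
  then show ?case using assms by (auto simp: weighted_adjacency_def walk_0 split: if_splits)
next
  case (Suc k)
  have A: "A \<in> carrier_mat n n" using assms(1) by (auto simp: weighted_adjacency_def)
  have nn: "\<And>l. l < n \<Longrightarrow> 0 \<le> (A ^\<^sub>m k) $$ (i,l)" using pow_nonneg[OF assms(1,2)] by auto
  have nA: "\<And>l. l < n \<Longrightarrow> 0 \<le> A $$ (l,j)" using assms(1) Suc.prems by (auto simp: weighted_adjacency_def)
  show ?case unfolding pow_entry_Suc[OF A assms(2) Suc.prems] walk_Suc[OF Suc.prems]
  proof
    assume "0 < (\<Sum>l<n. (A ^\<^sub>m k) $$ (i,l) * A $$ (l,j))"
    then obtain l where l: "l < n" "0 < (A ^\<^sub>m k) $$ (i,l) * A $$ (l,j)"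
      by (metis (no_types, lifting) lessThan_iff linorder_not_le sum_nonpos)
    then have "0 < (A ^\<^sub>m k) $$ (i,l)" "0 < A $$ (l,j)" using nn[OF l(1)] nA[OF l(1)]
      by (auto simp: zero_less_mult_iff)
    then show "\<exists>l<n. has_walk n A k i l \<and> A $$ (l,j) > 0" using Suc.IH l by blast
  next
    assume "\<exists>l<n. has_walk n A k i l \<and> A $$ (l,j) > 0"
    then obtain l where l: "l < n" "has_walk n A k i l" "A $$ (l,j) > 0" by blast
    show "0 < (\<Sum>l<n. (A ^\<^sub>m k) $$ (i,l) * A $$ (l,j))"
      apply (rule sum_pos2[of _ l])
      using l Suc.IH nn nA by auto
  qed
qed



lemma series_bounds:
  fixes a :: "nat \<Rightarrow> real"
  assumes nn: "\<And>k. 0 \<le> a k" and bd: "\<And>k. a k \<le> K^k" and z: "\<And>k. k < d \<Longrightarrow> a k = 0"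
    and t: "0 < t" "t*K \<le> 1/2" and K: "0 \<le> K"
  shows "summable (\<lambda>k. t^k * a k)" "t^d * a d \<le> (\<Sum>k. t^k * a k)"
    "(\<Sum>k. t^k * a k) \<le> 2*(2*K)^d * t^d"
proof -
  have tk: "t^k * a k \<le> (t*K)^k" for k
    by (metis bd less_imp_le mult_left_mono power_mult_distrib t(1) zero_less_power)
  have tk2: "(t*K)^k \<le> (1/2)^k" for k
    by (intro power_mono) (use t K in auto)
  show sm: "summable (\<lambda>k. t^k * a k)"
    apply (rule summable_comparison_test[of _ "\<lambda>k. (1/2::real)^k"])
    using tk tk2 nn t by (auto intro!: exI[of _ 0] order.trans[OF _ tk2] simp: abs_mult)
  show "t^d * a d \<le> (\<Sum>k. t^k * a k)"
    using sum_le_suminf[OF sm, of "{d}"] nn t by auto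
  let ?g = "\<lambda>k. (2*K)^d * t^d * (1/2::real)^k"
  have sg: "summable ?g" by (intro summable_mult summable_geometric) auto
  have "(\<Sum>k. ?g k) = (2*K)^d * t^d * 2"
    by (subst suminf_mult) (auto simp: suminf_geometric)
  moreover have "(\<Sum>k. t^k * a k) \<le> (\<Sum>k. ?g k)"
  proof (rule suminf_le[OF _ sm sg])
    fix k
    show "t^k * a k \<le> ?g k"
    proof (cases "k < d")
      case True then show ?thesis using z t K by simp
    next
      case False
      then obtain m where m: "k = d + m" by (metis le_add_diff_inverse not_less)
      have "t^k * a k \<le> (t*K)^d * (t*K)^m" using tk[of k] m by (simp add: power_add)
      also have "\<dots> \<le> (t*K)^d * (1/2)^m"
        by (intro mult_left_mono tk2) (use t K in auto)
      also have "\<dots> = ?g k" using m by (simp add: power_add power_mult_distrib field_simps)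
      finally show ?thesis .
    qed
  qed
  ultimately show "(\<Sum>k. t^k * a k) \<le> 2*(2*K)^d * t^d" by simp
qed



lemma resolvent_series:
  assumes wa: "weighted_adjacency n A" and M: "0 \<le> M" "\<And>i j. i < n \<Longrightarrow> j < n \<Longrightarrow> A $$ (i,j) \<le> M"
    and t: "0 < t" "t*(real n*M) \<le> 1/2" and ij: "i < n" "j < n"
  shows "resolvent n A t $$ (i,j) = (\<Sum>k. t^k * (A ^\<^sub>m k) $$ (i,j))"
proof -
  have A: "A \<in> carrier_mat n n" using wa by (auto simp: weighted_adjacency_def)
  have sm: "summable (\<lambda>k. t^k * (A ^\<^sub>m k) $$ (i,j))" if "i < n" "j < n" for i j
    using series_bounds(1)[of "\<lambda>k. (A ^\<^sub>m k) $$ (i,j)" "real n * M" 0 t]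
      pow_nonneg[OF wa that] pow_bound[OF wa that M] t M by auto
  define B where "B = mat n n (\<lambda>(i,j). \<Sum>k. t^k * (A ^\<^sub>m k) $$ (i,j))"
  have B: "B \<in> carrier_mat n n" unfolding B_def by auto
  have I: "1\<^sub>m n - t \<cdot>\<^sub>m A \<in> carrier_mat n n" using A by auto
  have BA: "(B * A) $$ (i,j) = (\<Sum>k. t^k * (A ^\<^sub>m Suc k) $$ (i,j))" if ij: "i < n" "j < n" for i j
  proof -
    have "(B * A) $$ (i,j) = (\<Sum>l<n. B $$ (i,l) * A $$ (l,j))"
      using A B ij by (simp add: scalar_prod_def lessThan_atLeast0 row_def col_def)
    also have "\<dots> = (\<Sum>l<n. \<Sum>k. t^k * (A ^\<^sub>m k) $$ (i,l) * A $$ (l,j))"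
      using ij by (intro sum.cong refl) (auto simp: B_def suminf_mult2[OF sm])
    also have "\<dots> = (\<Sum>k. \<Sum>l<n. t^k * (A ^\<^sub>m k) $$ (i,l) * A $$ (l,j))"
      using ij by (intro suminf_sum[symmetric] summable_mult2 sm) auto
    also have "\<dots> = (\<Sum>k. t^k * (A ^\<^sub>m Suc k) $$ (i,j))"
      unfolding pow_entry_Suc[OF A ij] by (simp add: sum_distrib_left mult.assoc)
    finally show ?thesis .
  qed
  have BI: "B * (1\<^sub>m n - t \<cdot>\<^sub>m A) = 1\<^sub>m n"
  proof -
    have "B * (1\<^sub>m n - t \<cdot>\<^sub>m A) = B * 1\<^sub>m n - B * (t \<cdot>\<^sub>m A)"
      using A B by (intro mult_minus_distrib_mat) auto
    also have "\<dots> = B - t \<cdot>\<^sub>m (B * A)" using A B by (simp add: mult_smult_distrib)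
    also have "\<dots> = 1\<^sub>m n"
    proof (rule eq_matI)
      fix i j assume ij: "i < dim_row (1\<^sub>m n :: real mat)" "j < dim_col (1\<^sub>m n :: real mat)"
      then have ij: "i < n" "j < n" by auto
      have s1: "summable (\<lambda>k. t^(Suc k) * (A ^\<^sub>m Suc k) $$ (i,j))"
        using summable_Suc_iff[THEN iffD2, OF sm[OF ij]] by simp
      have "summable (\<lambda>k. inverse t * (t^(Suc k) * (A ^\<^sub>m Suc k) $$ (i,j)))"
        by (rule summable_mult[OF s1])
      then have s2: "summable (\<lambda>k. t^k * (A ^\<^sub>m Suc k) $$ (i,j))"
        using t by (simp add: field_simps del: pow_mat.simps)
      have "t * (\<Sum>k. t^k * (A ^\<^sub>m Suc k) $$ (i,j)) = (\<Sum>k. t^(Suc k) * (A ^\<^sub>m Suc k) $$ (i,j))"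
        by (subst suminf_mult[symmetric, OF s2]) (simp add: mult.assoc del: pow_mat.simps)
      also have "\<dots> = (\<Sum>k. t^k * (A ^\<^sub>m k) $$ (i,j)) - (A ^\<^sub>m 0) $$ (i,j)"
        using suminf_split_head[OF sm[OF ij]] by simp
      finally show "(B - t \<cdot>\<^sub>m (B * A)) $$ (i,j) = 1\<^sub>m n $$ (i,j)"
        using ij A B BA[OF ij] by (simp add: B_def)
    qed (use A B in auto)
    finally show ?thesis .
  qed
  have IB: "(1\<^sub>m n - t \<cdot>\<^sub>m A) * B = 1\<^sub>m n"
    by (rule mat_mult_left_right_inverse[OF B I BI])
  have "resolvent n A t = B"
    unfolding resolvent_def
  proof (rule the_equality)
    fix B' assume B': "B' \<in> carrier_mat n n \<and> (1\<^sub>m n - t \<cdot>\<^sub>m A) * B' = 1\<^sub>m n \<and> B' * (1\<^sub>m n - t \<cdot>\<^sub>m A) = 1\<^sub>m n"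
    have "B' = B' * ((1\<^sub>m n - t \<cdot>\<^sub>m A) * B)" using IB B' using right_mult_one_mat[of B' n n] by simp
    also have "\<dots> = (B' * (1\<^sub>m n - t \<cdot>\<^sub>m A)) * B" using assoc_mult_mat[of B' n n "1\<^sub>m n - t \<cdot>\<^sub>m A" n B n] B' B I by simp
    also have "\<dots> = B" using B' B by simp
    finally show "B' = B" .
  qed (use B BI IB in auto)
  then show ?thesis using ij by (simp add: B_def)
qed



lemma limit_core:
  fixes n d :: nat and \<rho> c C :: real and rii rjj rij T :: "real \<Rightarrow> real"
  assumes n: "n > 0" and c: "c > 0" and C: "C > 0"
    and T_def: "T = (\<lambda>\<alpha>. inverse (\<rho> + inverse \<alpha>))"
    and ev: "eventually (\<lambda>\<alpha>. 1 \<le> rii \<alpha> \<and> rii \<alpha> \<le> 2 \<and> 1 \<le> rjj \<alpha> \<and> rjj \<alpha> \<le> 2 \<and>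
               c * T \<alpha> ^ d \<le> rij \<alpha> \<and> rij \<alpha> \<le> C * T \<alpha> ^ d) (at_right 0)"
  shows "((\<lambda>\<alpha>. theta n \<alpha> * ((ln (rii \<alpha>) + ln (rjj \<alpha>)) / 2 - ln (rij \<alpha>))) \<longlongrightarrow> real d) (at_right 0)"
proof -
  define L where "L = (\<lambda>\<alpha>::real. ln (exp 1 + \<alpha> powr (2 / real n)))"
  have ev01: "eventually (\<lambda>\<alpha>. 0 < \<alpha> \<and> \<alpha> < 1 \<and> 0 < \<rho> * \<alpha> + 1) (at_right (0::real))"
  proof -
    have "\<forall>y>0. y < min 1 (1/(\<bar>\<rho>\<bar>+1)) \<longrightarrow> 0 < y \<and> y < 1 \<and> 0 < \<rho> * y + 1"
    proof (intro allI impI)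
      fix y :: real assume y: "y > 0" "y < min 1 (1/(\<bar>\<rho>\<bar>+1))"
      then have "y * (\<bar>\<rho>\<bar>+1) < 1" by (simp add: field_simps)
      moreover have "- (\<rho> * y) \<le> \<bar>\<rho>\<bar> * y" using y by (simp add: abs_if)
      moreover have "y < 1" using y(2) by (simp only: min_less_iff_conj)
      ultimately show "0 < y \<and> y < 1 \<and> 0 < \<rho> * y + 1" using y by (simp add: algebra_simps)
    qed
    then show ?thesis unfolding eventually_at_right_field
      by (intro exI[of _ "min 1 (1/(\<bar>\<rho>\<bar>+1))"]) auto
  qed
  have thetaE: "eventually (\<lambda>\<alpha>. theta n \<alpha> = L \<alpha> * ((\<alpha> - 1) / ln \<alpha>)) (at_right 0)"
    using ev01 by eventually_elim (auto simp: theta_def L_def)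
  have Lpos: "eventually (\<lambda>\<alpha>. L \<alpha> > 0) (at_right 0)"
    using ev01 proof eventually_elim
    case (elim \<alpha>)
    have "1 < exp (1::real)" by simp
    moreover have "0 \<le> \<alpha> powr (2 / real n)" by simp
    ultimately show ?case unfolding L_def by (intro ln_gt_zero) linarith
  qed
  have theta_nn: "eventually (\<lambda>\<alpha>. theta n \<alpha> \<ge> 0) (at_right 0)"
    using ev01 thetaE Lpos
  proof eventually_elim
    case (elim \<alpha>)
    then have "(\<alpha> - 1) / ln \<alpha> \<ge> 0" by (intro divide_nonpos_neg) auto
    then have "0 \<le> L \<alpha> * ((\<alpha> - 1) / ln \<alpha>)" using elim by (intro mult_nonneg_nonneg) auto
    then show ?case using elim by (metis times_divide_eq_right)
  qed
  have L1: "(L \<longlongrightarrow> 1) (at_right 0)"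
  proof -
    have "((\<lambda>\<alpha>::real. \<alpha> powr (2 / real n)) \<longlongrightarrow> 0) (at_right 0)"
      by (rule tendsto_zero_powrI) (use n in \<open>auto intro!: tendsto_ident_at eventually_at_right_less[THEN eventually_mono]\<close>)
    then have "((\<lambda>\<alpha>::real. ln (exp 1 + \<alpha> powr (2 / real n))) \<longlongrightarrow> ln (exp 1 + 0)) (at_right 0)"
      by (intro tendsto_intros) auto
    then show ?thesis by (simp add: L_def)
  qed
  have q0: "((\<lambda>\<alpha>::real. (\<alpha> - 1) / ln \<alpha>) \<longlongrightarrow> 0) (at_right 0)" by real_asymp
  have il0: "((\<lambda>\<alpha>::real. inverse (ln \<alpha>)) \<longlongrightarrow> 0) (at_right 0)" by real_asymp
  have th0: "(theta n \<longlongrightarrow> 0) (at_right 0)"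
  proof -
    have "((\<lambda>\<alpha>. L \<alpha> * ((\<alpha> - 1) / ln \<alpha>)) \<longlongrightarrow> 1 * 0) (at_right 0)"
      by (intro tendsto_mult L1 q0)
    then show ?thesis using thetaE by (simp add: tendsto_cong)
  qed
  have thlnT: "((\<lambda>\<alpha>. theta n \<alpha> * ln (T \<alpha>)) \<longlongrightarrow> -1) (at_right 0)"
  proof -
    have lr: "((\<lambda>\<alpha>::real. ln (\<rho> * \<alpha> + 1)) \<longlongrightarrow> ln (\<rho> * 0 + 1)) (at_right 0)"
      by (intro tendsto_intros) auto
    have "((\<lambda>\<alpha>. L \<alpha> * (\<alpha> - 1) * (1 - ln (\<rho> * \<alpha> + 1) * inverse (ln \<alpha>))) \<longlongrightarrow> 1 * (0 - 1) * (1 - 0 * 0)) (at_right 0)"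
      by (intro tendsto_intros L1 lr[simplified] il0)
    moreover have "eventually (\<lambda>\<alpha>. L \<alpha> * (\<alpha> - 1) * (1 - ln (\<rho> * \<alpha> + 1) * inverse (ln \<alpha>)) = theta n \<alpha> * ln (T \<alpha>)) (at_right 0)"
      using ev01 thetaE
    proof eventually_elim
      case (elim \<alpha>)
      have "T \<alpha> = \<alpha> / (\<rho> * \<alpha> + 1)" using elim by (simp add: T_def field_simps)
      then have "ln (T \<alpha>) = ln \<alpha> - ln (\<rho> * \<alpha> + 1)" using elim by (simp add: ln_div)
      moreover have ne: "ln \<alpha> \<noteq> 0" using elim by simp
      ultimately have "theta n \<alpha> * ln (T \<alpha>) = L \<alpha> * ((\<alpha> - 1) / ln \<alpha>) * (ln \<alpha> - ln (\<rho> * \<alpha> + 1))"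
        using elim by (simp only:)
      also have "\<dots> = L \<alpha> * (\<alpha> - 1) * (1 - ln (\<rho> * \<alpha> + 1) * inverse (ln \<alpha>))"
        using ne by (simp add: field_simps)
      finally show ?case by simp
    qed
    ultimately show ?thesis by (simp add: tendsto_cong)
  qed
  define e where "e = (\<lambda>\<alpha>. ln (rij \<alpha>) - real d * ln (T \<alpha>))"
  have evb: "eventually (\<lambda>\<alpha>. 0 \<le> ln (rii \<alpha>) + ln (rjj \<alpha>) \<and> ln (rii \<alpha>) + ln (rjj \<alpha>) \<le> 2 * ln 2 \<and>
        ln c \<le> e \<alpha> \<and> e \<alpha> \<le> ln C) (at_right 0)"
    using ev ev01
  proof eventually_elim
    case (elim \<alpha>)
    have Tp: "T \<alpha> > 0" using elim by (simp add: T_def field_simps)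
    have r: "ln (rii \<alpha>) \<le> ln 2" "ln (rjj \<alpha>) \<le> ln 2" "0 \<le> ln (rii \<alpha>)" "0 \<le> ln (rjj \<alpha>)"
      using elim by auto
    have p: "0 < c * T \<alpha> ^ d" using c Tp by simp
    have "ln (c * T \<alpha> ^ d) \<le> ln (rij \<alpha>)" "ln (rij \<alpha>) \<le> ln (C * T \<alpha> ^ d)"
      using elim p C Tp by (auto intro!: ln_mono)
    moreover have "ln (c * T \<alpha> ^ d) = ln c + real d * ln (T \<alpha>)" "ln (C * T \<alpha> ^ d) = ln C + real d * ln (T \<alpha>)"
      using c C Tp by (simp_all add: ln_mult ln_realpow)
    ultimately show ?case using r by (auto simp: e_def)
  qed
  have A1: "((\<lambda>\<alpha>. theta n \<alpha> * ((ln (rii \<alpha>) + ln (rjj \<alpha>)) / 2)) \<longlongrightarrow> 0) (at_right 0)"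
  proof (rule tendsto_sandwich[of "\<lambda>_. 0" _ _ "\<lambda>\<alpha>. theta n \<alpha> * ln 2"])
    show "eventually (\<lambda>\<alpha>. 0 \<le> theta n \<alpha> * ((ln (rii \<alpha>) + ln (rjj \<alpha>)) / 2)) (at_right 0)"
      using evb theta_nn by eventually_elim auto
    show "eventually (\<lambda>\<alpha>. theta n \<alpha> * ((ln (rii \<alpha>) + ln (rjj \<alpha>)) / 2) \<le> theta n \<alpha> * ln 2) (at_right 0)"
      using evb theta_nn
    proof eventually_elim
      case (elim \<alpha>)
      then show ?case using mult_left_mono[of "(ln (rii \<alpha>) + ln (rjj \<alpha>)) / 2" "ln 2" "theta n \<alpha>"] by auto
    qed
    show "((\<lambda>\<alpha>. theta n \<alpha> * ln 2) \<longlongrightarrow> 0) (at_right 0)"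
      using tendsto_mult[OF th0 tendsto_const[of "ln 2"]] by simp
  qed auto
  have A2: "((\<lambda>\<alpha>. theta n \<alpha> * e \<alpha>) \<longlongrightarrow> 0) (at_right 0)"
  proof (rule tendsto_sandwich[of "\<lambda>\<alpha>. theta n \<alpha> * ln c" _ _ "\<lambda>\<alpha>. theta n \<alpha> * ln C"])
    show "eventually (\<lambda>\<alpha>. theta n \<alpha> * ln c \<le> theta n \<alpha> * e \<alpha>) (at_right 0)"
      using evb theta_nn by eventually_elim (auto intro!: mult_left_mono)
    show "eventually (\<lambda>\<alpha>. theta n \<alpha> * e \<alpha> \<le> theta n \<alpha> * ln C) (at_right 0)"
      using evb theta_nn by eventually_elim (auto intro!: mult_left_mono)
    show "((\<lambda>\<alpha>. theta n \<alpha> * ln c) \<longlongrightarrow> 0) (at_right 0)"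
      using tendsto_mult[OF th0 tendsto_const[of "ln c"]] by simp
    show "((\<lambda>\<alpha>. theta n \<alpha> * ln C) \<longlongrightarrow> 0) (at_right 0)"
      using tendsto_mult[OF th0 tendsto_const[of "ln C"]] by simp
  qed
  have "((\<lambda>\<alpha>. theta n \<alpha> * ((ln (rii \<alpha>) + ln (rjj \<alpha>)) / 2) - theta n \<alpha> * e \<alpha> - real d * (theta n \<alpha> * ln (T \<alpha>)))
        \<longlongrightarrow> 0 - 0 - real d * (-1)) (at_right 0)"
    by (intro tendsto_intros A1 A2 thlnT)
  then show ?thesis by (simp add: e_def algebra_simps)
qed



theorem theorem3:
  fixes n :: nat and A :: "real mat" and i j :: nat
  assumes "n \<ge> 2"
    and "weighted_adjacency n A"
    and "graph_connected n A"
    and "i < n" and "j < n"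
  shows "((\<lambda>\<alpha>. walk_dist n A \<alpha> i j) \<longlongrightarrow> real (sp_dist n A i j)) (at_right 0)"
proof -
  note wa = assms(2)
  have Ac: "A \<in> carrier_mat n n" using wa by (auto simp: weighted_adjacency_def)
  define M where "M = 1 + (\<Sum>p\<in>{..<n}\<times>{..<n}. A $$ p)"
  have Anonneg: "\<And>i j. i < n \<Longrightarrow> j < n \<Longrightarrow> 0 \<le> A $$ (i,j)" using wa by (auto simp: weighted_adjacency_def)
  have Ale: "A $$ (a,b) \<le> M" if "a < n" "b < n" for a b
  proof -
    have "A $$ (a,b) \<le> (\<Sum>p\<in>{..<n}\<times>{..<n}. A $$ p)"
      by (rule member_le_sum[of "(a,b)", simplified]) (use that Anonneg in auto)
    then show ?thesis by (simp add: M_def)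
  qed
  have M0: "0 \<le> M" using Ale[of 0 0] Anonneg[of 0 0] assms(1) by linarith
  define K where "K = real n * M"
  have K0: "0 \<le> K" using M0 by (simp add: K_def)
  define d where "d = sp_dist n A i j"
  have walk: "has_walk n A d i j" unfolding d_def sp_dist_def
    using assms(3-5) by (auto simp: graph_connected_def intro: LeastI_ex)
  have nowalk: "\<not> has_walk n A k i j" if "k < d" for k
    using not_less_Least[of k "\<lambda>k. has_walk n A k i j"] that by (simp add: d_def sp_dist_def)
  have cpos: "(A ^\<^sub>m d) $$ (i,j) > 0" using pow_pos_iff[OF wa assms(4,5)] walk by simp
  have zero: "(A ^\<^sub>m k) $$ (i,j) = 0" if "k < d" for k
    using pow_pos_iff[OF wa assms(4,5), of k] nowalk[OF that] pow_nonneg[OF wa assms(4,5), of k] by simp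
  define T where "T = (\<lambda>\<alpha>::real. inverse (rho A + inverse \<alpha>))"
  have Tlim: "(T \<longlongrightarrow> 0) (at_right 0)"
  proof -
    have "filterlim (\<lambda>\<alpha>::real. rho A + inverse \<alpha>) at_top (at_right 0)"
      by (rule filterlim_tendsto_add_at_top[OF tendsto_const filterlim_inverse_at_top_right])
    then show ?thesis unfolding T_def by (rule tendsto_inverse_0_at_top)
  qed
  have Tpos: "eventually (\<lambda>\<alpha>. T \<alpha> > 0) (at_right 0)"
  proof -
    have "filterlim (\<lambda>\<alpha>::real. rho A + inverse \<alpha>) at_top (at_right 0)"
      by (rule filterlim_tendsto_add_at_top[OF tendsto_const filterlim_inverse_at_top_right])
    then have "eventually (\<lambda>\<alpha>. rho A + inverse \<alpha> > 0) (at_right 0)"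
      by (simp add: filterlim_at_top_dense)
    then show ?thesis by eventually_elim (simp add: T_def)
  qed
  have Tsmall: "eventually (\<lambda>\<alpha>. T \<alpha> * K \<le> 1/2) (at_right 0)"
  proof -
    have "eventually (\<lambda>\<alpha>. T \<alpha> < 1 / (2 * (K + 1))) (at_right 0)"
      using order_tendstoD(2)[OF Tlim, of "1 / (2 * (K + 1))"] K0 by simp
    then show ?thesis using Tpos
    proof eventually_elim
      case (elim \<alpha>)
      then have "T \<alpha> * (2 * (K + 1)) < 1" using K0 by (simp add: field_simps)
      then show ?case using K0 elim by (simp add: algebra_simps)
    qed
  qed
  have diag: "1 \<le> resolvent n A t $$ (a,a) \<and> resolvent n A t $$ (a,a) \<le> 2"
    if "0 < t" "t * K \<le> 1/2" "a < n" for t a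
  proof -
    have eq: "resolvent n A t $$ (a,a) = (\<Sum>k. t^k * (A ^\<^sub>m k) $$ (a,a))"
      using resolvent_series[OF wa M0 Ale, of t a a] that by (simp add: K_def)
    note sb = series_bounds[of "\<lambda>k. (A ^\<^sub>m k) $$ (a,a)" K 0 t]
    have h: "\<And>k. 0 \<le> (A ^\<^sub>m k) $$ (a,a)" "\<And>k. (A ^\<^sub>m k) $$ (a,a) \<le> K^k"
      using pow_nonneg[OF wa that(3) that(3)] pow_bound[OF wa that(3) that(3) M0 Ale] by (auto simp: K_def)
    show ?thesis using sb(2,3)[OF h] that K0 Ac eq by simp
  qed
  have offd: "(A ^\<^sub>m d) $$ (i,j) * t^d \<le> resolvent n A t $$ (i,j) \<and> resolvent n A t $$ (i,j) \<le> 2*(2*K)^d * t^d"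
    if "0 < t" "t * K \<le> 1/2" for t
  proof -
    have eq: "resolvent n A t $$ (i,j) = (\<Sum>k. t^k * (A ^\<^sub>m k) $$ (i,j))"
      using resolvent_series[OF wa M0 Ale, of t i j] that assms(4,5) by (simp add: K_def)
    note sb = series_bounds[of "\<lambda>k. (A ^\<^sub>m k) $$ (i,j)" K d t]
    have h: "\<And>k. 0 \<le> (A ^\<^sub>m k) $$ (i,j)" "\<And>k. (A ^\<^sub>m k) $$ (i,j) \<le> K^k"
      using pow_nonneg[OF wa assms(4,5)] pow_bound[OF wa assms(4,5) M0 Ale] by (auto simp: K_def)
    show ?thesis using sb(2,3)[OF h zero] that K0 eq by (simp add: mult.commute)
  qed
  have ev: "eventually (\<lambda>\<alpha>. 1 \<le> resolvent n A (T \<alpha>) $$ (i,i) \<and> resolvent n A (T \<alpha>) $$ (i,i) \<le> 2 \<and>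
      1 \<le> resolvent n A (T \<alpha>) $$ (j,j) \<and> resolvent n A (T \<alpha>) $$ (j,j) \<le> 2 \<and>
      (A ^\<^sub>m d) $$ (i,j) * T \<alpha> ^ d \<le> resolvent n A (T \<alpha>) $$ (i,j) \<and>
      resolvent n A (T \<alpha>) $$ (i,j) \<le> (2*(2*K)^d) * T \<alpha> ^ d) (at_right 0)"
    using Tpos Tsmall
  proof eventually_elim
    case (elim \<alpha>)
    then show ?case using diag[OF elim, of i] diag[OF elim, of j] offd[OF elim] assms(4,5) by auto
  qed
  have "1 \<le> M" unfolding M_def using Anonneg by (auto intro!: sum_nonneg)
  then have "0 < K" using assms(1) by (simp add: K_def)
  then have Cpos: "0 < 2*(2*K)^d" by simp
  have "((\<lambda>\<alpha>. theta n \<alpha> * ((ln (resolvent n A (T \<alpha>) $$ (i,i)) + ln (resolvent n A (T \<alpha>) $$ (j,j))) / 2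
      - ln (resolvent n A (T \<alpha>) $$ (i,j)))) \<longlongrightarrow> real d) (at_right 0)"
    by (rule limit_core[OF _ cpos Cpos T_def ev]) (use assms(1) in auto)
  then show ?thesis unfolding walk_dist_def Let_def T_def d_def .
qed


end
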